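(* Let $H$ be the group with presentation $$\langle \{x_m\}_{m\in\mathbb{Z}}\cup\{y_n\}_{n\in\mathbb{Z}} \mid \{\,y_n = x_{n+1}^{-1}y_{n+1}^{-1}x_{n+1}\,\}_{n\in\mathbb{Z}}\rangle.$$ Then $H$ is locally free, and each of the generators $x_m$ ($m\in\mathbb{Z}$) and $y_n$ ($n\in\mathbb{Z}$) represents a nontrivial element of $H$.
   Context: A group is locally free if every finitely generated subgroup is free. Work in $\mathsf{ZFC}$. *)

theory Defs
  imports "HOL-Algebra.Algebra"
begin

text \<open>Words over an alphabet of generators: a letter (a, True) stands for the
generator a, and (a, False) for its inverse.\<close>

type_synonym 'a word = "('a \<times> bool) list"

definition inv_letter :: "'a \<times> bool \<Rightarrow> 'a \<times> bool" where
  "inv_letter l = (fst l, \<not> snd l)"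

fun reduced :: "'a word \<Rightarrow> bool" where
  "reduced [] = True"
| "reduced [l] = True"
| "reduced (l # m # w) = (m \<noteq> inv_letter l \<and> reduced (m # w))"

fun cancel_letter :: "'a \<times> bool \<Rightarrow> 'a word \<Rightarrow> 'a word" where
  "cancel_letter l [] = [l]"
| "cancel_letter l (m # w) = (if m = inv_letter l then w else l # m # w)"

definition reduce :: "'a word \<Rightarrow> 'a word" where
  "reduce w = foldr cancel_letter w []"

definition free_grp :: "('a word) monoid" where
  "free_grp = \<lparr>carrier = {w. reduced w}, monoid.mult = (\<lambda>u v. reduce (u @ v)), one = []\<rparr>"

definition normal_closure :: "('g, 'b) monoid_scheme \<Rightarrow> 'g set \<Rightarrow> 'g set" where
  "normal_closure G R =
     generate G (\<Union>g\<in>carrier G. (\<lambda>r. g \<otimes>\<^bsub>G\<^esub> r \<otimes>\<^bsub>G\<^esub> inv\<^bsub>G\<^esub> g) ` R)"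

definition presented_group :: "'a word set \<Rightarrow> ('a word set) monoid" where
  "presented_group R = free_grp Mod normal_closure free_grp (reduce ` R)"

definition pres_gen :: "'a word set \<Rightarrow> 'a \<Rightarrow> 'a word set" where
  "pres_gen R a = normal_closure free_grp (reduce ` R) #>\<^bsub>free_grp\<^esub> [(a, True)]"

definition word_eval :: "('g, 'b) monoid_scheme \<Rightarrow> 'g word \<Rightarrow> 'g" where
  "word_eval G w = foldr (\<lambda>l acc. (if snd l then fst l else inv\<^bsub>G\<^esub> (fst l)) \<otimes>\<^bsub>G\<^esub> acc) w \<one>\<^bsub>G\<^esub>"

definition free_basis :: "('g, 'b) monoid_scheme \<Rightarrow> 'g set \<Rightarrow> bool" where
  "free_basis G B \<longleftrightarrow> B \<subseteq> carrier G \<and> generate G B = carrier G \<and>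
     (\<forall>w. w \<noteq> [] \<and> reduced w \<and> fst ` set w \<subseteq> B \<longrightarrow> word_eval G w \<noteq> \<one>\<^bsub>G\<^esub>)"

definition free_group :: "('g, 'b) monoid_scheme \<Rightarrow> bool" where
  "free_group G \<longleftrightarrow> group G \<and> (\<exists>B. free_basis G B)"

definition locally_free :: "('g, 'b) monoid_scheme \<Rightarrow> bool" where
  "locally_free G \<longleftrightarrow> group G \<and>
     (\<forall>A. finite A \<and> A \<subseteq> carrier G \<longrightarrow> free_group (G\<lparr>carrier := generate G A\<rparr>))"

text \<open>Generators: Inl m = x_m, Inr n = y_n. Relator for y_n = x_{n+1}^-1 y_{n+1}^-1 x_{n+1}:
the word y_n^-1 x_{n+1}^-1 y_{n+1}^-1 x_{n+1}.\<close>
definition H_rels :: "(int + int) word set" where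
  "H_rels = (\<lambda>n. [(Inr n, False), (Inl (n+1), False), (Inr (n+1), False), (Inl (n+1), True)]) ` UNIV"

end

theory Submission
  imports Defs "HOL-Library.Countable"
begin

definition inv_word :: "'a word \<Rightarrow> 'a word" where
  "inv_word w = rev (map inv_letter w)"

lemma inv_inv_letter[simp]: "inv_letter (inv_letter l) = l"
  by (simp add: inv_letter_def)
lemma inv_letter_neq[simp]: "inv_letter l \<noteq> l" "l \<noteq> inv_letter l"
  by (auto simp add: inv_letter_def prod_eq_iff)
lemma inv_letter_eq_iff: "inv_letter l = m \<longleftrightarrow> l = inv_letter m"
  by auto

lemma inv_word_simps[simp]: "inv_word [] = []" "inv_word (l # w) = inv_word w @ [inv_letter l]"
  "inv_word (u @ v) = inv_word v @ inv_word u" "inv_word (inv_word w) = w"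
  "length (inv_word w) = length w"
  by (auto simp add: inv_word_def rev_map[symmetric] comp_def)

lemma inv_word_Nil_iff[simp]: "inv_word w = [] \<longleftrightarrow> w = []"
  by (simp add: inv_word_def)

lemma reduced_Cons: "reduced (l # w) \<longleftrightarrow> reduced w \<and> (w \<noteq> [] \<longrightarrow> hd w \<noteq> inv_letter l)"
  by (cases w) auto

lemma reduced_append: "reduced (u @ v) \<longleftrightarrow> reduced u \<and> reduced v \<and>
   (u \<noteq> [] \<and> v \<noteq> [] \<longrightarrow> hd v \<noteq> inv_letter (last u))"
  by (induction u) (auto simp add: reduced_Cons)

lemma reduced_appendI3:
  "reduced (u @ [c]) \<Longrightarrow> reduced (c # v) \<Longrightarrow> reduced (u @ c # v)"
  by (auto simp add: reduced_append reduced_Cons)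

lemma reduced_inv_word[simp]: "reduced (inv_word w) \<longleftrightarrow> reduced w"
proof (induction w)
  case (Cons l w) thus ?case
    by (cases w) (auto simp add: reduced_append reduced_Cons inv_letter_def prod_eq_iff)
qed simp

lemma cancel_reduced: "reduced z \<Longrightarrow> reduced (cancel_letter l z)"
  by (cases z) (auto simp add: reduced_Cons)

lemma foldr_cancel_reduced: "reduced z \<Longrightarrow> reduced (foldr cancel_letter u z)"
  by (induction u) (auto intro: cancel_reduced)

lemma reduced_reduce[simp]: "reduced (reduce w)"
  by (simp add: reduce_def foldr_cancel_reduced)

lemma cancel_inv_cancel: "reduced z \<Longrightarrow> cancel_letter l (cancel_letter (inv_letter l) z) = z"
proof (cases z)
  case (Cons m z')
  assume r: "reduced z"
  show ?thesis
  proof (cases "m = l")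
    case True
    with r Cons show ?thesis by (cases z') (auto simp add: reduced_Cons)
  qed (use Cons in auto)
qed simp

lemma reduce_reduced: "reduced w \<Longrightarrow> reduce w = w"
proof (induction w)
  case (Cons l w)
  then have "reduced w" by (simp add: reduced_Cons)
  with Cons show ?case
    by (cases w) (auto simp add: reduce_def)
qed (simp add: reduce_def)

lemma reduce_Nil[simp]: "reduce [] = []" by (simp add: reduce_def)

lemma reduce_idem[simp]: "reduce (reduce w) = reduce w"
  by (simp add: reduce_reduced)

lemma reduce_append_foldr: "reduce (u @ v) = foldr cancel_letter u (reduce v)"
  by (simp add: reduce_def)

lemma foldr_cancel_reduce: "reduced z \<Longrightarrow> foldr cancel_letter u z = foldr cancel_letter (reduce u) z"
proof (induction u)
  case Nil then show ?case by (simp add: reduce_def)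
next
  case (Cons l u)
  define r where "r = reduce u"
  have rr: "reduced r" by (simp add: r_def)
  have "foldr cancel_letter (l # u) z = cancel_letter l (foldr cancel_letter r z)"
    using Cons by (simp add: r_def)
  also have "\<dots> = foldr cancel_letter (cancel_letter l r) z"
  proof (cases "r \<noteq> [] \<and> hd r = inv_letter l")
    case True
    then obtain r' where r': "r = inv_letter l # r'" by (cases r) auto
    have "reduced (foldr cancel_letter r' z)" by (rule foldr_cancel_reduced[OF Cons.prems])
    then show ?thesis using r' by (simp add: cancel_inv_cancel)
  next
    case False
    then have "cancel_letter l r = l # r" by (cases r) auto
    then show ?thesis by simp
  qed
  also have "cancel_letter l r = reduce (l # u)" by (simp add: r_def reduce_def)
  finally show ?case .
qed

lemma reduce_append: "reduce (u @ v) = reduce (reduce u @ reduce v)"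
proof -
  have "reduce (u @ v) = foldr cancel_letter u (reduce v)" by (rule reduce_append_foldr)
  also have "\<dots> = foldr cancel_letter (reduce u) (reduce v)"
    by (rule foldr_cancel_reduce) simp
  also have "\<dots> = reduce (reduce u @ reduce v)" by (simp add: reduce_append_foldr)
  finally show ?thesis .
qed

lemma reduce_append_left: "reduce (reduce u @ v) = reduce (u @ v)"
  by (simp only: reduce_append[of "reduce u" v] reduce_append[of u v] reduce_idem)
lemma reduce_append_right: "reduce (u @ reduce v) = reduce (u @ v)"
  by (simp only: reduce_append[of u "reduce v"] reduce_append[of u v] reduce_idem)

lemma reduce_mid: "reduce (u @ reduce v @ w) = reduce (u @ v @ w)"
proof -
  have "reduce (u @ reduce v @ w) = reduce (u @ reduce (reduce v @ w))"
    by (rule reduce_append_right[symmetric])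
  also have "\<dots> = reduce (u @ reduce (v @ w))" by (simp only: reduce_append_left)
  also have "\<dots> = reduce (u @ v @ w)" by (rule reduce_append_right)
  finally show ?thesis .
qed

lemma reduce_Cons: "reduce (l # w) = cancel_letter l (reduce w)"
  by (simp add: reduce_def)

lemma reduce_inv_cancel_letter: "reduce (u @ [inv_letter l, l] @ w) = reduce (u @ w)"
  using cancel_inv_cancel[of "reduce w" "inv_letter l"]
  by (simp add: reduce_append_foldr reduce_Cons)

lemma reduce_inv_cancel: "reduce (u @ inv_word p @ p @ w) = reduce (u @ w)"
proof (induction p arbitrary: w)
  case (Cons c p)
  have "reduce (u @ inv_word (c # p) @ (c # p) @ w) = reduce ((u @ inv_word p) @ [inv_letter c, c] @ (p @ w))"
    by simp
  also have "\<dots> = reduce (u @ inv_word p @ p @ w)" by (subst reduce_inv_cancel_letter) simp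
  finally show ?case using Cons by simp
qed simp

lemma reduce_inv_cancel2: "reduce (u @ p @ inv_word p @ w) = reduce (u @ w)"
  using reduce_inv_cancel[of u "inv_word p" w] by simp

lemma free_grp_simps[simp]: "carrier free_grp = {w. reduced w}"
  "x \<otimes>\<^bsub>free_grp\<^esub> y = reduce (x @ y)" "\<one>\<^bsub>free_grp\<^esub> = []"
  by (simp_all add: free_grp_def)

lemma group_free_grp: "group free_grp"
proof (rule groupI)
  fix x y z :: "'a word"
  assume "x \<in> carrier free_grp" "y \<in> carrier free_grp" "z \<in> carrier free_grp"
  then show "x \<otimes>\<^bsub>free_grp\<^esub> y \<otimes>\<^bsub>free_grp\<^esub> z = x \<otimes>\<^bsub>free_grp\<^esub> (y \<otimes>\<^bsub>free_grp\<^esub> z)"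
    by (simp add: reduce_append_left reduce_append_right)
next
  fix x :: "'a word" assume x: "x \<in> carrier free_grp"
  show "\<exists>y\<in>carrier free_grp. y \<otimes>\<^bsub>free_grp\<^esub> x = \<one>\<^bsub>free_grp\<^esub>"
    using x reduce_inv_cancel[of "[]" x "[]"] by (intro bexI[of _ "inv_word x"]) auto
qed (auto simp add: reduce_reduced)

interpretation F: group "free_grp :: 'a word monoid" by (rule group_free_grp)

lemma inv_free_grp[simp]: "reduced x \<Longrightarrow> inv\<^bsub>free_grp\<^esub> x = inv_word x"
  using reduce_inv_cancel[of "[]" x "[]"] reduce_reduced[of x]
  by (intro F.inv_equality) auto

lemma Cons_mult: "reduced (l # w) \<Longrightarrow> l # w = [l] \<otimes>\<^bsub>free_grp\<^esub> w"
  by (simp add: reduce_reduced)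

definition ext :: "('g, 'b) monoid_scheme \<Rightarrow> ('a \<Rightarrow> 'g) \<Rightarrow> 'a word \<Rightarrow> 'g" where
  "ext G g w = word_eval G (map (\<lambda>(a, e). (g a, e)) w)"

lemma word_eval_simps[simp]: "word_eval G [] = \<one>\<^bsub>G\<^esub>"
  "word_eval G (l # w) = (if snd l then fst l else inv\<^bsub>G\<^esub> (fst l)) \<otimes>\<^bsub>G\<^esub> word_eval G w"
  by (simp_all add: word_eval_def)

context group begin

lemma word_eval_closed: "fst ` set w \<subseteq> carrier G \<Longrightarrow> word_eval G w \<in> carrier G"
  by (induction w) auto

lemma word_eval_append: "fst ` set u \<subseteq> carrier G \<Longrightarrow> fst ` set v \<subseteq> carrier G \<Longrightarrow>
  word_eval G (u @ v) = word_eval G u \<otimes> word_eval G v"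
  by (induction u) (auto simp add: m_assoc word_eval_closed)

lemma ext_Nil[simp]: "ext G g [] = \<one>" by (simp add: ext_def)
lemma ext_Cons: "ext G g (l # w) = (if snd l then g (fst l) else inv (g (fst l))) \<otimes> ext G g w"
  by (cases l) (simp add: ext_def)

lemma ext_closed: "range g \<subseteq> carrier G \<Longrightarrow> ext G g w \<in> carrier G"
  unfolding ext_def by (rule word_eval_closed) auto

lemma ext_append: "range g \<subseteq> carrier G \<Longrightarrow> ext G g (u @ v) = ext G g u \<otimes> ext G g v"
  unfolding ext_def by (simp add: word_eval_append[where u="map _ u"] ) (rule word_eval_append; auto)

lemma ext_single_inv: assumes "range g \<subseteq> carrier G" shows "ext G g [inv_letter l] \<otimes> ext G g [l] = \<one>"
proof -
  have "\<And>a. g a \<in> carrier G" using assms by auto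
  then show ?thesis by (cases l) (auto simp add: ext_Cons inv_letter_def)
qed

lemma ext_cancel: assumes "range g \<subseteq> carrier G"
  shows "ext G g (cancel_letter l z) = ext G g [l] \<otimes> ext G g z"
proof (cases z)
  case (Cons m z')
  show ?thesis
  proof (cases "m = inv_letter l")
    case True
    have "ext G g [l] \<otimes> ext G g z = ext G g [l] \<otimes> (ext G g [inv_letter l] \<otimes> ext G g z')"
      using Cons True ext_append[OF assms, of "[m]" z'] by simp
    also have "\<dots> = ext G g z'"
      using ext_single_inv[OF assms, of "inv_letter l"] assms
      by (simp add: m_assoc[symmetric] ext_closed)
    finally show ?thesis using Cons True by simp
  next
    case False
    then show ?thesis using Cons ext_append[OF assms, of "[l]" z] by simp
  qed
qed (use assms ext_append[OF assms, of "[l]" "[]"] in simp)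

lemma ext_foldr: "range g \<subseteq> carrier G \<Longrightarrow> ext G g (foldr cancel_letter u z) = ext G g u \<otimes> ext G g z"
proof (induction u)
  case (Cons l u)
  then show ?case
    using ext_append[OF Cons.prems, of "[l]" u]
    by (simp add: ext_cancel m_assoc ext_closed)
qed (simp add: ext_closed)

lemma ext_reduce: "range g \<subseteq> carrier G \<Longrightarrow> ext G g (reduce w) = ext G g w"
  unfolding reduce_def by (simp add: ext_foldr ext_closed)

lemma ext_hom: "range g \<subseteq> carrier G \<Longrightarrow> ext G g \<in> hom free_grp G"
  by (rule homI) (auto simp add: ext_closed ext_reduce ext_append)

lemma hom_free_unique:
  assumes h: "h \<in> hom free_grp G" and hg: "\<And>a. h [(a, True)] = g a" and w: "reduced w"
  shows "h w = ext G g w"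
  using w
proof (induction w)
  case Nil
  then show ?case using hom_one[OF h group_free_grp is_group] by simp
next
  case (Cons l w)
  interpret gh: group_hom free_grp G h by (intro group_hom.intro group_hom_axioms.intro group_free_grp is_group h)
  have rw: "reduced w" using Cons.prems by (simp add: reduced_Cons)
  have e: "l # w = [l] \<otimes>\<^bsub>free_grp\<^esub> w" by (rule Cons_mult[OF Cons.prems])
  have "h (l # w) = h [l] \<otimes> h w"
    unfolding e by (rule gh.hom_mult) (use rw in auto)
  moreover have "h [l] = (if snd l then g (fst l) else inv (g (fst l)))"
  proof (cases l)
    case (Pair a e)
    show ?thesis
    proof (cases e)
      case False
      have "[(a, False)] = inv\<^bsub>free_grp\<^esub> [(a, True)]" by (simp add: inv_letter_def)
      then have "h [(a, False)] = inv (h [(a, True)])"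
        by (simp only:) (rule gh.hom_inv, simp)
      then show ?thesis using Pair False hg by simp
    qed (use Pair hg in simp)
  qed
  ultimately show ?case using Cons.IH[OF rw] by (simp add: ext_Cons)
qed

end

lemma word_eval_subgroup:
  assumes "group G" "subgroup K G" "fst ` set w \<subseteq> K"
  shows "word_eval (G\<lparr>carrier := K\<rparr>) w = word_eval G w"
  using assms(3) by (induction w) (auto simp add: group.m_inv_consistent[OF assms(1,2)])

lemma word_eval_hom:
  assumes "h \<in> hom G G'" "group G" "group G'" "fst ` set w \<subseteq> carrier G"
  shows "h (word_eval G w) = word_eval G' (map (\<lambda>(x, e). (h x, e)) w)"
proof -
  interpret group_hom G G' h by (intro group_hom.intro group_hom_axioms.intro assms)
  show ?thesis using assms(4) by (induction w) (auto simp add: G.word_eval_closed)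
qed

definition wrel :: "('a::countable) word rel" where
  "wrel = lenlex (inv_image less_than to_nat)"

lemma wf_wrel: "wf wrel"
  unfolding wrel_def by (intro wf_lenlex wf_inv_image wf_less_than)

lemma total_wrel: "x \<noteq> y \<Longrightarrow> (x, y) \<in> wrel \<or> (y, x) \<in> wrel"
proof -
  have "total (inv_image less_than (to_nat :: 'a \<times> bool \<Rightarrow> nat))"
    unfolding total_on_def
  proof (intro ballI impI)
    fix x y :: "'a \<times> bool" assume "x \<noteq> y"
    then have "to_nat x \<noteq> to_nat y" by (simp add: inj_eq)
    then have "to_nat x < to_nat y \<or> to_nat y < to_nat x" by arith
    then show "(x, y) \<in> inv_image less_than to_nat \<or> (y, x) \<in> inv_image less_than to_nat" by (simp del: inj_eq)
  qed
  then have "total (lenlex (inv_image less_than (to_nat :: 'a \<times> bool \<Rightarrow> nat)))"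
    by (rule total_lenlex)
  moreover assume "x \<noteq> y"
  ultimately show ?thesis unfolding wrel_def total_on_def by blast
qed

lemma wrel_length: "(x, y) \<in> wrel \<Longrightarrow> length x \<le> length y"
  unfolding wrel_def by (rule lenlex_length)

lemma wrel_Nil: "y \<noteq> [] \<Longrightarrow> ([], y) \<in> wrel"
  unfolding wrel_def by simp

lemma wrel_shorter: "length x < length y \<Longrightarrow> (x, y) \<in> wrel"
  unfolding wrel_def by (simp add: lenlex_conv)

lemma wrel_snoc: "(x, y) \<in> wrel \<Longrightarrow> (x @ [l], y @ [l]) \<in> wrel"
  unfolding wrel_def by (rule lenlex_append1) simp_all

definition minw :: "('a::countable) word set \<Rightarrow> 'a word" where
  "minw S = (SOME m. m \<in> S \<and> (\<forall>y\<in>S. (y, m) \<notin> wrel))"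

lemma minw: assumes "S \<noteq> {}" shows "minw S \<in> S" "\<And>y. y \<in> S \<Longrightarrow> (y, minw S) \<notin> wrel"
proof -
  obtain z where "z \<in> S" "\<And>y. (y, z) \<in> wrel \<Longrightarrow> y \<notin> S"
    using assms wfE_min'[OF wf_wrel] by blast
  then have "\<exists>m. m \<in> S \<and> (\<forall>y\<in>S. (y, m) \<notin> wrel)" by blast
  then have "minw S \<in> S \<and> (\<forall>y\<in>S. (y, minw S) \<notin> wrel)"
    unfolding minw_def by (rule someI_ex)
  then show "minw S \<in> S" "\<And>y. y \<in> S \<Longrightarrow> (y, minw S) \<notin> wrel" by auto
qed

lemma minw_le: "y \<in> S \<Longrightarrow> y = minw S \<or> (minw S, y) \<in> wrel"
  using minw[of S] total_wrel[of y "minw S"] by blast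

abbreviation F :: "('a::countable) word monoid" where "F \<equiv> free_grp"

locale schreier =
  fixes H :: "('a::countable) word set"
  assumes sub: "subgroup H free_grp"
begin

definition rep :: "'a word \<Rightarrow> 'a word" where
  "rep x = minw (H #>\<^bsub>free_grp\<^esub> x)"

definition T :: "'a word set" where "T = rep ` {w. reduced w}"

lemma Hsub: "H \<subseteq> {w. reduced w}" using subgroup.subset[OF sub] by simp

lemma rep_in: "reduced x \<Longrightarrow> rep x \<in> H #>\<^bsub>free_grp\<^esub> x"
  unfolding rep_def by (rule minw) (use F.rcos_self[OF _ sub] in auto)

lemma rep_reduced: "reduced x \<Longrightarrow> reduced (rep x)"
  using rep_in[of x] F.r_coset_subset_G[of H x] Hsub by auto

lemma rep_coset: "reduced x \<Longrightarrow> H #>\<^bsub>free_grp\<^esub> rep x = H #>\<^bsub>free_grp\<^esub> x"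
  using F.repr_independence[OF rep_in _ sub, of x] by simp

lemma rep_eqI: "H #>\<^bsub>free_grp\<^esub> x = H #>\<^bsub>free_grp\<^esub> y \<Longrightarrow> rep x = rep y"
  unfolding rep_def by simp

lemma rep_rep: "reduced x \<Longrightarrow> rep (rep x) = rep x"
  by (intro rep_eqI rep_coset)

lemma rep_T: "t \<in> T \<Longrightarrow> rep t = t"
  unfolding T_def by (auto simp add: rep_rep)

lemma T_reduced: "t \<in> T \<Longrightarrow> reduced t"
  unfolding T_def by (auto simp add: rep_reduced)

lemma rep_in_T: "reduced x \<Longrightarrow> rep x \<in> T"
  unfolding T_def by auto

lemma rep_decomp: "reduced x \<Longrightarrow> \<exists>h\<in>H. rep x = reduce (h @ x)"
  using rep_in[of x] by (auto simp add: r_coset_def)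

lemma rep_mult: assumes "reduced x" "reduced y"
  shows "rep (reduce (rep x @ y)) = rep (reduce (x @ y))"
proof -
  obtain h where h: "h \<in> H" "rep x = reduce (h @ x)" using rep_decomp[OF assms(1)] by blast
  have "reduce (rep x @ y) = reduce (h @ reduce (x @ y))"
    using h by (simp add: reduce_append_left reduce_append_right)
  then have "reduce (rep x @ y) \<in> H #>\<^bsub>free_grp\<^esub> reduce (x @ y)"
    using h by (auto simp add: r_coset_def)
  then have "H #>\<^bsub>free_grp\<^esub> reduce (x @ y) = H #>\<^bsub>free_grp\<^esub> reduce (rep x @ y)"
    by (intro F.repr_independence[OF _ _ sub]) auto
  then show ?thesis by (intro rep_eqI) simp
qed

lemma rep_Nil: "rep [] = []"
proof -
  have "[] \<in> H #>\<^bsub>free_grp\<^esub> []" by (rule F.rcos_self[OF _ sub]) simp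
  then have "[] = rep [] \<or> (rep [], []) \<in> wrel" unfolding rep_def by (rule minw_le)
  then show ?thesis unfolding wrel_def by auto
qed

lemma rep_Nil_iff: assumes "reduced x" shows "rep x = [] \<longleftrightarrow> x \<in> H"
proof
  assume "x \<in> H"
  then have "H #>\<^bsub>free_grp\<^esub> x = H" using F.coset_join2[OF _ sub, of x] assms by simp
  moreover have "H #>\<^bsub>free_grp\<^esub> [] = H" using F.coset_mult_one[of H] Hsub by simp
  ultimately have "rep x = rep []" by (intro rep_eqI) simp
  then show "rep x = []" using rep_Nil by simp
next
  assume "rep x = []"
  then have "H #>\<^bsub>free_grp\<^esub> x = H #>\<^bsub>free_grp\<^esub> []" using rep_coset[OF assms] by simp
  also have "\<dots> = H" using F.coset_mult_one[of H] Hsub by simp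
  finally show "x \<in> H" using F.rcos_self[OF _ sub, of x] assms by simp
qed

lemma Nil_T: "[] \<in> T" using rep_in_T[of "[]"] rep_Nil by simp

lemma reduce_snoc: assumes "reduced s"
  shows "length (reduce (s @ [l])) \<le> length s + 1"
    and "\<not> (s \<noteq> [] \<and> last s = inv_letter l) \<Longrightarrow> reduce (s @ [l]) = s @ [l]"
    and "s \<noteq> [] \<Longrightarrow> last s = inv_letter l \<Longrightarrow> reduce (s @ [l]) = butlast s"
proof -
  show c2: "\<not> (s \<noteq> [] \<and> last s = inv_letter l) \<Longrightarrow> reduce (s @ [l]) = s @ [l]"
    using assms by (intro reduce_reduced) (auto simp add: reduced_append)
  show c3: "s \<noteq> [] \<Longrightarrow> last s = inv_letter l \<Longrightarrow> reduce (s @ [l]) = butlast s"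
  proof -
    assume "s \<noteq> []" "last s = inv_letter l"
    then have sd: "s = butlast s @ [inv_letter l]" using append_butlast_last_id[of s] by simp
    then have "s @ [l] = butlast s @ inv_word [l] @ [l] @ []" by (simp add: inv_word_def)
    then have "reduce (s @ [l]) = reduce (butlast s @ [])" by (simp only: reduce_inv_cancel)
    moreover have "reduced (butlast s)" using assms sd reduced_append[of "butlast s" "[inv_letter l]"] by simp
    ultimately show ?thesis by (simp add: reduce_reduced)
  qed
  show "length (reduce (s @ [l])) \<le> length s + 1"
    using c2 c3 by (cases "s \<noteq> [] \<and> last s = inv_letter l") auto
qed

lemma T_prefix1: assumes t: "t \<in> T" and ts: "t = s @ [l]" shows "s \<in> T"
proof (rule ccontr)
  assume sT: "s \<notin> T"
  have rt: "reduced t" using T_reduced[OF t] .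
  then have rs: "reduced s" and rsl: "reduced (s @ [l])" using ts by (auto simp add: reduced_append)
  define s' where "s' = rep s"
  have s'T: "s' \<in> T" and rs': "reduced s'" using rs by (auto simp add: s'_def rep_in_T rep_reduced)
  have "s' \<noteq> s" using sT s'T by auto
  have sin: "s \<in> H #>\<^bsub>free_grp\<^esub> s" by (rule F.rcos_self[OF _ sub]) (simp add: rs)
  have "(s, minw (H #>\<^bsub>free_grp\<^esub> s)) \<notin> wrel" by (rule minw(2)) (use sin in auto)
  then have "(s, s') \<notin> wrel" by (simp add: s'_def rep_def)
  moreover note \<open>s' \<noteq> s\<close>
  ultimately have lt: "(s', s) \<in> wrel" using total_wrel by blast
  have "rep (reduce (s' @ [l])) = rep (reduce (s @ [l]))"
    unfolding s'_def by (rule rep_mult[OF rs]) simp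
  also have "\<dots> = t" using rsl ts rep_T[OF t] by (simp add: reduce_reduced)
  finally have eq: "rep (reduce (s' @ [l])) = t" .
  have "(reduce (s' @ [l]), t) \<in> wrel"
  proof (cases "s' \<noteq> [] \<and> last s' = inv_letter l")
    case True
    then have "reduce (s' @ [l]) = butlast s'" using reduce_snoc(3)[OF rs'] by auto
    moreover have "length s' \<le> length s" using wrel_length[OF lt] .
    ultimately show ?thesis using ts True by (intro wrel_shorter) auto
  next
    case False
    then have "reduce (s' @ [l]) = s' @ [l]" using reduce_snoc(2)[OF rs'] by auto
    then show ?thesis using ts wrel_snoc[OF lt] by simp
  qed
  moreover have "reduce (s' @ [l]) \<in> H #>\<^bsub>free_grp\<^esub> reduce (s' @ [l])"
    by (rule F.rcos_self[OF _ sub]) simp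
  ultimately have lt2: "(reduce (s' @ [l]), t) \<in> wrel" and xin: "reduce (s' @ [l]) \<in> H #>\<^bsub>free_grp\<^esub> reduce (s' @ [l])"
    by simp_all
  have "(reduce (s' @ [l]), minw (H #>\<^bsub>free_grp\<^esub> reduce (s' @ [l]))) \<notin> wrel"
    by (rule minw(2)) (use xin in auto)
  then show False using eq lt2 by (simp add: rep_def)
qed

lemma T_prefix: "s @ r \<in> T \<Longrightarrow> s \<in> T"
proof (induction r rule: rev_induct)
  case (snoc x xs)
  have "s @ xs \<in> T" by (rule T_prefix1[of "s @ xs @ [x]" "s @ xs" x]) (use snoc.prems in simp_all)
  then show ?case by (rule snoc.IH)
qed simp

end

lemma hd_inv_word: "w \<noteq> [] \<Longrightarrow> hd (inv_word w) = inv_letter (last w)"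
  by (simp add: inv_word_def hd_rev last_map)
lemma last_inv_word: "w \<noteq> [] \<Longrightarrow> last (inv_word w) = inv_letter (hd w)"
  by (simp add: inv_word_def last_rev hd_map)

lemma reduce_pair: "reduced x \<Longrightarrow> reduce (x @ [l, inv_letter l]) = x"
  using reduce_inv_cancel2[of x "[l]" "[]"] by (simp add: reduce_reduced inv_word_def)

lemma lcp_split: "\<exists>p x' y'. x = p @ x' \<and> y = p @ y' \<and> (x' \<noteq> [] \<and> y' \<noteq> [] \<longrightarrow> hd x' \<noteq> hd y')"
proof (induction x arbitrary: y)
  case Nil then show ?case by (intro exI[of _ "[]"] exI[of _ "[]"] exI[of _ y]) auto
next
  case (Cons a x)
  show ?case
  proof (cases y)
    case Nil then show ?thesis by (intro exI[of _ "[]"] exI[of _ "a # x"] exI[of _ "[]"]) auto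
  next
    case (Cons b y')
    show ?thesis
    proof (cases "a = b")
      case True
      obtain p x'' y'' where "x = p @ x''" "y' = p @ y''" "x'' \<noteq> [] \<and> y'' \<noteq> [] \<longrightarrow> hd x'' \<noteq> hd y''"
        using Cons.IH[of y'] by blast
      then show ?thesis using Cons True by (intro exI[of _ "a # p"] exI[of _ x''] exI[of _ y'']) auto
    next
      case False
      then show ?thesis using Cons by (intro exI[of _ "[]"] exI[of _ "a # x"] exI[of _ "y"]) auto
    qed
  qed
qed

lemma reduced_suffix: "reduced (p @ x) \<Longrightarrow> reduced x"
  by (simp add: reduced_append)
lemma reduced_prefix: "reduced (p @ x) \<Longrightarrow> reduced p"
  by (simp add: reduced_append)

context schreier begin

lemma rep_mult': "reduced x \<Longrightarrow> reduced y \<Longrightarrow> rep (rep x \<otimes>\<^bsub>free_grp\<^esub> y) = rep (x \<otimes>\<^bsub>free_grp\<^esub> y)"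
  using rep_mult by simp

definition gam :: "'a word \<Rightarrow> 'a \<Rightarrow> 'a word" where
  "gam t a = t \<otimes>\<^bsub>free_grp\<^esub> [(a, True)] \<otimes>\<^bsub>free_grp\<^esub> inv\<^bsub>free_grp\<^esub> (rep (t \<otimes>\<^bsub>free_grp\<^esub> [(a, True)]))"

definition BB :: "'a word set" where
  "BB = {gam t a | t a. t \<in> T \<and> gam t a \<noteq> []}"

lemma gam_eq: "t \<in> T \<Longrightarrow> gam t a = reduce (t @ (a, True) # inv_word (rep (reduce (t @ [(a, True)]))))"
  unfolding gam_def using T_reduced[of t]
  by (simp add: rep_reduced reduce_append_left reduce_append_right)

lemma rep_back: assumes "t \<in> T"
  shows "rep (reduce (rep (reduce (t @ [(a, True)])) @ [(a, False)])) = t"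
proof -
  have rt: "reduced t" using T_reduced[OF assms] .
  have "rep (reduce (rep (reduce (t @ [(a, True)])) @ [(a, False)])) =
        rep (reduce (reduce (t @ [(a, True)]) @ [(a, False)]))"
    by (rule rep_mult) simp_all
  also have "reduce (reduce (t @ [(a, True)]) @ [(a, False)]) = reduce (t @ [(a, True), (a, False)])"
    by (simp add: reduce_append_left)
  also have "\<dots> = t" using reduce_pair[OF rt, of "(a, True)"] by (simp add: inv_letter_def)
  finally show ?thesis using rep_T[OF assms] by simp
qed

lemma rep_back2: assumes "t \<in> T"
  shows "rep (reduce (rep (reduce (t @ [(a, False)])) @ [(a, True)])) = t"
proof -
  have rt: "reduced t" using T_reduced[OF assms] .
  have "rep (reduce (rep (reduce (t @ [(a, False)])) @ [(a, True)])) =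
        rep (reduce (reduce (t @ [(a, False)]) @ [(a, True)]))"
    by (rule rep_mult) simp_all
  also have "reduce (reduce (t @ [(a, False)]) @ [(a, True)]) = reduce (t @ [(a, False), (a, True)])"
    by (simp add: reduce_append_left)
  also have "\<dots> = t" using reduce_pair[OF rt, of "(a, False)"] by (simp add: inv_letter_def)
  finally show ?thesis using rep_T[OF assms] by simp
qed

lemma gam_props:
  assumes t: "t \<in> T" and g: "gam t a \<noteq> []"
  defines "u \<equiv> rep (reduce (t @ [(a, True)]))"
  shows "reduced (t @ [(a, True)])" "t @ [(a, True)] \<notin> T" "u \<in> T"
    "reduced (u @ [(a, False)])" "u @ [(a, False)] \<notin> T"
    "gam t a = t @ [(a, True)] @ inv_word u"
proof -
  have rt: "reduced t" using T_reduced[OF t] .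
  show uT: "u \<in> T" unfolding u_def by (rule rep_in_T) simp
  have ru: "reduced u" using T_reduced[OF uT] .
  have gu: "gam t a = reduce (t @ (a, True) # inv_word u)" using gam_eq[OF t] by (simp add: u_def)
  show ra: "reduced (t @ [(a, True)])"
  proof (rule ccontr)
    assume nr: "\<not> reduced (t @ [(a, True)])"
    then have tne: "t \<noteq> []" and lt: "last t = (a, False)" using rt
      by (auto simp add: reduced_append inv_letter_def prod_eq_iff)
    obtain s where td: "t = s @ [(a, False)]"
      using append_butlast_last_id[of t] tne lt by (intro that[of "butlast t"]) simp
    have sT: "s \<in> T" using T_prefix[of s "[(a, False)]"] td t by simp
    have "reduce (t @ [(a, True)]) = s"
      using reduce_pair[of s "(a, False)"] rt td by (simp add: inv_letter_def reduced_append)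
    then have "u = s" using rep_T[OF sT] by (simp add: u_def)
    then have "gam t a = reduce ([] @ s @ inv_word s @ [])"
      using gu td reduce_inv_cancel_letter[of s "(a, True)" "inv_word s"] by (simp add: inv_letter_def)
    then have "gam t a = []" by (simp only: reduce_inv_cancel2) simp
    with g show False by simp
  qed
  show nb: "t @ [(a, True)] \<notin> T"
  proof
    assume "t @ [(a, True)] \<in> T"
    then have "u = t @ [(a, True)]" using ra by (simp add: u_def reduce_reduced rep_T)
    then have "gam t a = reduce ([] @ (t @ [(a, True)]) @ inv_word (t @ [(a, True)]) @ [])"
      using gu by simp
    then have "gam t a = []" by (simp only: reduce_inv_cancel2) simp
    with g show False by simp
  qed
  have bk: "rep (reduce (u @ [(a, False)])) = t" unfolding u_def by (rule rep_back[OF t])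
  show rc: "reduced (u @ [(a, False)])"
  proof (rule ccontr)
    assume nr: "\<not> reduced (u @ [(a, False)])"
    then have une: "u \<noteq> []" and lu: "last u = (a, True)" using ru
      by (auto simp add: reduced_append inv_letter_def prod_eq_iff)
    obtain s where ud: "u = s @ [(a, True)]"
      using append_butlast_last_id[of u] une lu by (intro that[of "butlast u"]) simp
    have sT: "s \<in> T" using T_prefix[of s "[(a, True)]"] ud uT by simp
    have "reduce (u @ [(a, False)]) = s"
      using reduce_pair[of s "(a, True)"] ru ud by (simp add: inv_letter_def reduced_append)
    then have "s = t" using bk rep_T[OF sT] by simp
    then have "u = t @ [(a, True)]" using ud by simp
    with uT nb show False by simp
  qed
  show "u @ [(a, False)] \<notin> T"
  proof
    assume "u @ [(a, False)] \<in> T"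
    then have "t = u @ [(a, False)]" using bk rc by (simp add: reduce_reduced rep_T)
    then have "\<not> reduced (t @ [(a, True)])"
      by (simp add: reduced_append inv_letter_def)
    with ra show False by simp
  qed
  have "reduced ((a, True) # inv_word u)"
    using rc reduced_inv_word[of "u @ [(a, False)]"] by (simp add: inv_letter_def)
  then have "reduced (t @ (a, True) # inv_word u)" by (rule reduced_appendI3[OF ra])
  then show "gam t a = t @ [(a, True)] @ inv_word u" using gu by (simp add: reduce_reduced)
qed


lemma gam_in_H: assumes "t \<in> T" shows "gam t a \<in> H"
proof -
  define x where "x = t \<otimes>\<^bsub>free_grp\<^esub> [(a, True)]"
  have rx: "reduced x" by (simp add: x_def)
  obtain h where h: "h \<in> H" "rep x = h \<otimes>\<^bsub>free_grp\<^esub> x" using rep_decomp[OF rx] by auto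
  have hc: "h \<in> carrier free_grp" using h Hsub by auto
  have xc: "x \<in> carrier free_grp" using rx by simp
  have "gam t a = x \<otimes>\<^bsub>free_grp\<^esub> inv\<^bsub>free_grp\<^esub> (h \<otimes>\<^bsub>free_grp\<^esub> x)"
    unfolding gam_def x_def[symmetric] h(2) ..
  also have "\<dots> = inv\<^bsub>free_grp\<^esub> h"
    using hc xc by (simp add: F.inv_mult_group F.m_assoc[symmetric] del: free_grp_simps)
  finally show ?thesis using h(1) by (simp add: subgroup.m_inv_closed[OF sub] del: free_grp_simps)
qed

lemma BB_sub_H: "BB \<subseteq> H"
  unfolding BB_def using gam_in_H by auto

lemma BB_carrier: "BB \<subseteq> carrier free_grp"
  using BB_sub_H Hsub by auto

lemma gam_gen: "t \<in> T \<Longrightarrow> gam t a \<in> generate free_grp BB"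
proof (cases "gam t a = []")
  case True
  then show ?thesis using generate.one[of free_grp BB] by simp
next
  case False
  assume "t \<in> T"
  with False have "gam t a \<in> BB" unfolding BB_def by blast
  then show ?thesis by (rule generate.incl)
qed

lemma gam_inv_gen: "t \<in> T \<Longrightarrow> inv\<^bsub>free_grp\<^esub> (gam t a) \<in> generate free_grp BB"
  using F.generate_m_inv_closed[OF BB_carrier gam_gen] .

lemma gen_main: "t \<in> T \<Longrightarrow> reduced w \<Longrightarrow>
  t \<otimes>\<^bsub>free_grp\<^esub> w \<otimes>\<^bsub>free_grp\<^esub> inv\<^bsub>free_grp\<^esub> (rep (t \<otimes>\<^bsub>free_grp\<^esub> w)) \<in> generate free_grp BB"
proof (induction w arbitrary: t)
  case Nil
  have rt: "reduced t" using T_reduced[OF Nil(1)] .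
  then have "t \<otimes>\<^bsub>free_grp\<^esub> [] \<otimes>\<^bsub>free_grp\<^esub> inv\<^bsub>free_grp\<^esub> (rep (t \<otimes>\<^bsub>free_grp\<^esub> [])) = []"
    using rep_T[OF Nil(1)] reduce_inv_cancel2[of "[]" t "[]"] by (simp add: reduce_reduced)
  then show ?case using generate.one[of free_grp BB] by simp
next
  case (Cons l w)
  have rt: "reduced t" using T_reduced[OF Cons(2)] .
  have rw: "reduced w" using Cons(3) by (simp add: reduced_Cons)
  define t1 where "t1 = rep (t \<otimes>\<^bsub>free_grp\<^esub> [l])"
  have t1T: "t1 \<in> T" unfolding t1_def by (rule rep_in_T) simp
  have rt1: "reduced t1" using T_reduced[OF t1T] .
  define r where "r = rep (t1 \<otimes>\<^bsub>free_grp\<^esub> w)"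
  have rr: "reduced r" unfolding r_def by (rule rep_reduced) simp
  have r_eq: "r = rep (t \<otimes>\<^bsub>free_grp\<^esub> (l # w))"
  proof -
    have "r = rep ((t \<otimes>\<^bsub>free_grp\<^esub> [l]) \<otimes>\<^bsub>free_grp\<^esub> w)"
      unfolding r_def t1_def by (rule rep_mult') (simp_all add: rw)
    also have "(t \<otimes>\<^bsub>free_grp\<^esub> [l]) \<otimes>\<^bsub>free_grp\<^esub> w = t \<otimes>\<^bsub>free_grp\<^esub> (l # w)"
      by (simp add: reduce_append_left)
    finally show ?thesis .
  qed
  have Y: "t1 \<otimes>\<^bsub>free_grp\<^esub> w \<otimes>\<^bsub>free_grp\<^esub> inv\<^bsub>free_grp\<^esub> r \<in> generate free_grp BB"
    unfolding r_def by (rule Cons.IH[OF t1T rw])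
  define Xe where "Xe = t \<otimes>\<^bsub>free_grp\<^esub> [l] \<otimes>\<^bsub>free_grp\<^esub> inv\<^bsub>free_grp\<^esub> t1"
  have Xe: "Xe \<in> generate free_grp BB"
  proof (cases l)
    case (Pair a e)
    show ?thesis
    proof (cases e)
      case True
      then show ?thesis using gam_gen[OF Cons(2), of a] Pair by (simp add: Xe_def gam_def t1_def)
    next
      case False
      have t1d: "t1 = rep (reduce (t @ [(a, False)]))" using Pair False by (simp add: t1_def)
      have "rep (t1 \<otimes>\<^bsub>free_grp\<^esub> [(a, True)]) = t"
        using rep_back2[OF Cons(2), of a] t1d by simp
      then have g1: "gam t1 a = reduce (t1 @ (a, True) # inv_word t)"
        using gam_eq[OF t1T, of a] rt by simp
      have "Xe \<otimes>\<^bsub>free_grp\<^esub> gam t1 a = reduce (t @ [(a, False)] @ inv_word t1 @ t1 @ (a, True) # inv_word t)"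
        using Pair False rt1 by (simp add: Xe_def g1 reduce_append_left reduce_append_right)
      also have "\<dots> = reduce ((t @ [(a, False)]) @ (a, True) # inv_word t)"
        by (metis append.assoc reduce_inv_cancel)
      also have "\<dots> = reduce (t @ [inv_letter (a, True), (a, True)] @ inv_word t)"
        by (simp add: inv_letter_def)
      also have "\<dots> = reduce (t @ inv_word t)" by (rule reduce_inv_cancel_letter)
      also have "\<dots> = []" using reduce_inv_cancel2[of "[]" t "[]"] by simp
      finally have "Xe \<otimes>\<^bsub>free_grp\<^esub> gam t1 a = \<one>\<^bsub>free_grp\<^esub>" by simp
      then have "inv\<^bsub>free_grp\<^esub> (gam t1 a) = Xe"
        by (intro F.inv_equality) (simp_all add: Xe_def gam_def)
      then show ?thesis using gam_inv_gen[OF t1T, of a] by simp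
    qed
  qed
  have "Xe \<otimes>\<^bsub>free_grp\<^esub> (t1 \<otimes>\<^bsub>free_grp\<^esub> w \<otimes>\<^bsub>free_grp\<^esub> inv\<^bsub>free_grp\<^esub> r)
      = t \<otimes>\<^bsub>free_grp\<^esub> (l # w) \<otimes>\<^bsub>free_grp\<^esub> inv\<^bsub>free_grp\<^esub> r"
  proof -
    have "Xe \<otimes>\<^bsub>free_grp\<^esub> (t1 \<otimes>\<^bsub>free_grp\<^esub> w \<otimes>\<^bsub>free_grp\<^esub> inv\<^bsub>free_grp\<^esub> r)
       = reduce ((t @ [l]) @ inv_word t1 @ t1 @ (w @ inv_word r))"
      using rt1 rr by (simp add: Xe_def reduce_append_left reduce_append_right)
    also have "\<dots> = reduce ((t @ [l]) @ (w @ inv_word r))" by (rule reduce_inv_cancel)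
    also have "\<dots> = t \<otimes>\<^bsub>free_grp\<^esub> (l # w) \<otimes>\<^bsub>free_grp\<^esub> inv\<^bsub>free_grp\<^esub> r"
      using rr by (simp add: reduce_append_left reduce_append_right)
    finally show ?thesis .
  qed
  then show ?case using generate.eng[OF Xe Y] r_eq by simp
qed

lemma H_gen: "generate free_grp BB = H"
proof
  show "generate free_grp BB \<subseteq> H" by (rule F.generate_subgroup_incl[OF BB_sub_H sub])
next
  show "H \<subseteq> generate free_grp BB"
  proof
    fix h assume h: "h \<in> H"
    then have rh: "reduced h" using Hsub by auto
    have "[] \<otimes>\<^bsub>free_grp\<^esub> h \<otimes>\<^bsub>free_grp\<^esub> inv\<^bsub>free_grp\<^esub> (rep ([] \<otimes>\<^bsub>free_grp\<^esub> h)) \<in> generate free_grp BB"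
      by (rule gen_main[OF Nil_T rh])
    moreover have "rep h = []" using rep_Nil_iff[OF rh] h by simp
    ultimately show "h \<in> generate free_grp BB" using rh by (simp add: reduce_reduced)
  qed
qed

end

context schreier begin

definition pick :: "'a word \<Rightarrow> 'a word \<times> 'a" where
  "pick b = (SOME p. fst p \<in> T \<and> gam (fst p) (snd p) \<noteq> [] \<and> b = gam (fst p) (snd p))"

definition "tb b = fst (pick b)"
definition "ab b = snd (pick b)"
definition "ub b = rep (reduce (tb b @ [(ab b, True)]))"

lemma pick: assumes "b \<in> BB" shows "tb b \<in> T" "gam (tb b) (ab b) \<noteq> []" "b = gam (tb b) (ab b)"
proof -
  have "\<exists>p. fst p \<in> T \<and> gam (fst p) (snd p) \<noteq> [] \<and> b = gam (fst p) (snd p)"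
    using assms unfolding BB_def by auto
  then have "fst (pick b) \<in> T \<and> gam (fst (pick b)) (snd (pick b)) \<noteq> [] \<and> b = gam (fst (pick b)) (snd (pick b))"
    unfolding pick_def by (rule someI_ex)
  then show "tb b \<in> T" "gam (tb b) (ab b) \<noteq> []" "b = gam (tb b) (ab b)"
    unfolding tb_def ab_def by blast+
qed

definition "fP b e = (if e then tb b else ub b)"
definition "fm b e = (ab b, e)"
definition "fQ b e = (if e then ub b else tb b)"

lemma factor: assumes b: "b \<in> BB"
  shows "fP b e \<in> T" "fQ b e \<in> T" "reduced (fP b e @ [fm b e])" "fP b e @ [fm b e] \<notin> T"
    "reduced (fQ b e @ [inv_letter (fm b e)])" "fQ b e @ [inv_letter (fm b e)] \<notin> T"
    "(if e then b else inv_word b) = fP b e @ [fm b e] @ inv_word (fQ b e)"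
proof -
  note pk = pick[OF b]
  note gp = gam_props[OF pk(1,2), folded ub_def]
  have bb: "b = tb b @ [(ab b, True)] @ inv_word (ub b)" using pk(3) gp(6) by simp
  show "fP b e \<in> T" "fQ b e \<in> T" using gp(3) pk(1) by (simp_all add: fP_def fQ_def)
  show "reduced (fP b e @ [fm b e])" "fP b e @ [fm b e] \<notin> T"
    "reduced (fQ b e @ [inv_letter (fm b e)])" "fQ b e @ [inv_letter (fm b e)] \<notin> T"
    using gp by (simp_all add: fP_def fQ_def fm_def inv_letter_def)
  show "(if e then b else inv_word b) = fP b e @ [fm b e] @ inv_word (fQ b e)"
  proof (cases e)
    case False
    have "inv_word b = inv_word (tb b @ [(ab b, True)] @ inv_word (ub b))" using arg_cong[OF bb, of inv_word] .
    also have "\<dots> = ub b @ [(ab b, False)] @ inv_word (tb b)" by (simp add: inv_letter_def)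
    finally show ?thesis using False by (simp add: fP_def fQ_def fm_def)
  qed (use bb in \<open>simp add: fP_def fQ_def fm_def\<close>)
qed

lemma junction:
  assumes xT: "x \<in> T" and yT: "y \<in> T"
    and rx1: "reduced (x @ [inv_letter m1])" and nx1: "x @ [inv_letter m1] \<notin> T"
    and ry2: "reduced (y @ [m2])" and ny2: "y @ [m2] \<notin> T"
    and ne: "\<not> (x = y \<and> m2 = inv_letter m1)"
  shows "reduced (m1 # reduce (inv_word x @ y) @ [m2])"
proof -
  obtain p x' y' where xs: "x = p @ x'" and ys: "y = p @ y'" and d: "x' \<noteq> [] \<and> y' \<noteq> [] \<longrightarrow> hd x' \<noteq> hd y'"
    using lcp_split[of x y] by blast
  have R: "reduce (inv_word x @ y) = reduce (inv_word x' @ y')"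
    using reduce_inv_cancel[of "inv_word x'" p y'] xs ys by simp
  have rx': "reduced (x' @ [inv_letter m1])" using rx1 xs reduced_suffix[of p] by simp
  have ry': "reduced (y' @ [m2])" using ry2 ys reduced_suffix[of p] by simp
  have rx'': "reduced x'" and ry'': "reduced y'" using rx' ry' reduced_prefix by blast+
  have A: "reduced (m1 # inv_word x')"
    using reduced_inv_word[of "x' @ [inv_letter m1]"] rx' by simp
  show ?thesis
  proof (cases "x' = []")
    case True
    note x'e = True
    show ?thesis
    proof (cases "y' = []")
      case True
      then have "x = y" using xs ys x'e by simp
      then have "m2 \<noteq> inv_letter m1" using ne by simp
      moreover have "reduce (inv_word x @ y) = []" using R x'e True by simp
      ultimately show ?thesis by simp
    next
      case False
      have Ry: "reduce (inv_word x @ y) = y'" using R x'e ry'' by (simp add: reduce_reduced)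
      have "hd y' \<noteq> inv_letter m1"
      proof
        assume h: "hd y' = inv_letter m1"
        have "y = (x @ [inv_letter m1]) @ tl y'" using ys xs x'e h False by (cases y') auto
        then have "x @ [inv_letter m1] \<in> T" using T_prefix yT by metis
        with nx1 show False by simp
      qed
      then show ?thesis using Ry ry' False by (simp add: reduced_Cons)
    qed
  next
    case False
    note x'ne = False
    show ?thesis
    proof (cases "y' = []")
      case True
      have Rx: "reduce (inv_word x @ y) = inv_word x'" using R True rx'' by (simp add: reduce_reduced)
      have "m2 \<noteq> hd x'"
      proof
        assume h: "m2 = hd x'"
        have "x = (y @ [m2]) @ tl x'" using ys xs True h x'ne by (cases x') auto
        then have "y @ [m2] \<in> T" using T_prefix xT by metis
        with ny2 show False by simp
      qed
      then have "reduced ((m1 # inv_word x') @ [m2])"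
        using A x'ne by (subst reduced_append) (simp add: last_inv_word)
      then show ?thesis using Rx by simp
    next
      case False
      have Rxy: "reduce (inv_word x @ y) = inv_word x' @ y'"
        using R rx'' ry'' d x'ne False
        by (intro trans[OF R] reduce_reduced) (simp add: reduced_append last_inv_word)
      have "reduced ((m1 # inv_word x') @ (y' @ [m2]))"
        using A ry' d x'ne False by (subst reduced_append) (simp add: last_inv_word)
      then show ?thesis using Rxy by simp
    qed
  qed
qed

lemma pair_excl:
  assumes b1: "b1 \<in> BB" and b2: "b2 \<in> BB" and q: "fQ b1 e1 = fP b2 e2"
    and m: "fm b2 e2 = inv_letter (fm b1 e1)"
  shows "b2 = b1 \<and> e2 = (\<not> e1)"
proof -
  have e2: "e2 = (\<not> e1)" and a: "ab b2 = ab b1" using m by (simp_all add: fm_def inv_letter_def)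
  have tt: "tb b2 = tb b1"
  proof (cases e1)
    case True
    then have "ub b1 = ub b2" using q e2 by (simp add: fQ_def fP_def)
    then show ?thesis using rep_back[OF pick(1)[OF b1], of "ab b1"] rep_back[OF pick(1)[OF b2], of "ab b2"] a
      by (simp add: ub_def)
  next
    case False
    then show ?thesis using q e2 by (simp add: fQ_def fP_def)
  qed
  have "b2 = b1" using pick(3)[OF b1] pick(3)[OF b2] tt a by simp
  with e2 show ?thesis by simp
qed

lemma BB_reduced: "b \<in> BB \<Longrightarrow> reduced b" using BB_carrier by auto

lemma eval_form:
  "w \<noteq> [] \<Longrightarrow> reduced w \<Longrightarrow> fst ` set w \<subseteq> BB \<Longrightarrow>
   \<exists>Z. word_eval free_grp w = fP (fst (hd w)) (snd (hd w)) @ [fm (fst (hd w)) (snd (hd w))] @ Z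
     \<and> reduced (fP (fst (hd w)) (snd (hd w)) @ [fm (fst (hd w)) (snd (hd w))] @ Z)"
proof (induction w)
  case Nil then show ?case by simp
next
  case (Cons l w)
  obtain b e where l: "l = (b, e)" by (cases l)
  have b: "b \<in> BB" using Cons.prems l by auto
  note fb = factor[OF b, of e]
  have rb: "reduced b" using BB_reduced[OF b] .
  have val: "(if e then b else inv\<^bsub>free_grp\<^esub> b) = fP b e @ [fm b e] @ inv_word (fQ b e)"
    using fb(7) rb by (cases e) simp_all
  show ?case
  proof (cases "w = []")
    case True
    have we: "word_eval free_grp (l # w) = (if e then b else inv_word b)"
      using True l rb by (simp add: reduce_reduced)
    have rv: "reduced (if e then b else inv_word b)" using rb by simp
    have rv2: "reduced (fP b e @ [fm b e] @ inv_word (fQ b e))" using rv unfolding fb(7) .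
    show ?thesis using we rv2 l unfolding fb(7) by (intro exI[of _ "inv_word (fQ b e)"]) simp
  next
    case False
    have rw: "reduced w" using Cons.prems(2) by (simp add: reduced_Cons)
    obtain Z2 where Z2: "word_eval free_grp w = fP (fst (hd w)) (snd (hd w)) @ [fm (fst (hd w)) (snd (hd w))] @ Z2"
      "reduced (fP (fst (hd w)) (snd (hd w)) @ [fm (fst (hd w)) (snd (hd w))] @ Z2)"
      using Cons.IH[OF False rw] Cons.prems(3) by auto
    obtain b2 e2 where hw: "hd w = (b2, e2)" by (cases "hd w")
    have b2: "b2 \<in> BB" using Cons.prems(3) False hw by (cases w) auto
    note fb2 = factor[OF b2, of e2]
    have nei: "hd w \<noteq> inv_letter l" using Cons.prems(2) False by (cases w) auto
    have ne: "\<not> (fQ b e = fP b2 e2 \<and> fm b2 e2 = inv_letter (fm b e))"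
    proof
      assume "fQ b e = fP b2 e2 \<and> fm b2 e2 = inv_letter (fm b e)"
      then have "b2 = b \<and> e2 = (\<not> e)" using pair_excl[OF b b2] by blast
      then show False using nei hw l by (simp add: inv_letter_def)
    qed
    define R where "R = reduce (inv_word (fQ b e) @ fP b2 e2)"
    have J: "reduced (fm b e # R @ [fm b2 e2])"
      unfolding R_def by (rule junction[OF fb(2) fb2(1) fb(5) fb(6) fb2(3) fb2(4) ne])
    have Z2': "word_eval free_grp w = fP b2 e2 @ [fm b2 e2] @ Z2" "reduced (fP b2 e2 @ [fm b2 e2] @ Z2)"
      using Z2 hw by simp_all
    have wc: "fst ` set w \<subseteq> carrier free_grp" using Cons.prems(3) BB_carrier by auto
    have "word_eval free_grp (l # w) = (if e then b else inv\<^bsub>free_grp\<^esub> b) \<otimes>\<^bsub>free_grp\<^esub> word_eval free_grp w"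
      using l by simp
    then have "word_eval free_grp (l # w) = reduce ((fP b e @ [fm b e] @ inv_word (fQ b e)) @ word_eval free_grp w)"
      unfolding val by simp
    also have "\<dots> = reduce ((fP b e @ [fm b e]) @ (inv_word (fQ b e) @ fP b2 e2) @ ([fm b2 e2] @ Z2))"
      using Z2'(1) by simp
    also have "\<dots> = reduce ((fP b e @ [fm b e]) @ R @ ([fm b2 e2] @ Z2))"
      unfolding R_def by (rule reduce_mid[symmetric])
    also have "\<dots> = fP b e @ fm b e # R @ fm b2 e2 # Z2"
    proof -
      have r2: "reduced (fm b2 e2 # Z2)" using Z2'(2) reduced_suffix[of "fP b2 e2"] by simp
      have "reduced ((fm b e # R) @ fm b2 e2 # Z2)"
        by (rule reduced_appendI3) (use J r2 in simp_all)
      then have "reduced (fP b e @ fm b e # (R @ fm b2 e2 # Z2))"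
        by (intro reduced_appendI3[OF fb(3)]) simp
      then show ?thesis by (simp add: reduce_reduced)
    qed
    finally have ev: "word_eval free_grp (l # w) = fP b e @ [fm b e] @ (R @ fm b2 e2 # Z2)" by simp
    have "reduced (fP b e @ [fm b e] @ (R @ fm b2 e2 # Z2))"
    proof -
      have r2: "reduced (fm b2 e2 # Z2)" using Z2'(2) reduced_suffix[of "fP b2 e2"] by simp
      have "reduced ((fm b e # R) @ fm b2 e2 # Z2)"
        by (rule reduced_appendI3) (use J r2 in simp_all)
      then have "reduced (fP b e @ fm b e # (R @ fm b2 e2 # Z2))"
        by (intro reduced_appendI3[OF fb(3)]) simp
      then show ?thesis by simp
    qed
    then show ?thesis using ev l by (intro exI[of _ "R @ fm b2 e2 # Z2"]) simp
  qed
qed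

theorem schreier_free_basis: "free_basis (free_grp\<lparr>carrier := H\<rparr>) BB"
  unfolding free_basis_def
proof (intro conjI allI impI)
  show "BB \<subseteq> carrier (free_grp\<lparr>carrier := H\<rparr>)" using BB_sub_H by simp
  show "generate (free_grp\<lparr>carrier := H\<rparr>) BB = carrier (free_grp\<lparr>carrier := H\<rparr>)"
    using F.generate_consistent[OF BB_sub_H sub] H_gen by simp
  fix w assume w: "w \<noteq> [] \<and> reduced w \<and> fst ` set w \<subseteq> BB"
  have "word_eval (free_grp\<lparr>carrier := H\<rparr>) w = word_eval free_grp w"
    by (rule word_eval_subgroup[OF group_free_grp sub]) (use w BB_sub_H in auto)
  moreover obtain Z where "word_eval free_grp w = fP (fst (hd w)) (snd (hd w)) @ [fm (fst (hd w)) (snd (hd w))] @ Z"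
    using eval_form w by blast
  ultimately show "word_eval (free_grp\<lparr>carrier := H\<rparr>) w \<noteq> \<one>\<^bsub>free_grp\<lparr>carrier := H\<rparr>\<^esub>" by simp
qed

end

lemma locally_free_free_grp: "locally_free (free_grp :: ('a::countable) word monoid)"
  unfolding locally_free_def
proof (intro conjI allI impI)
  show "group (free_grp :: 'a word monoid)" by (rule group_free_grp)
  fix A :: "'a word set" assume A: "finite A \<and> A \<subseteq> carrier free_grp"
  have sub: "subgroup (generate free_grp A) free_grp" using F.generate_is_subgroup A by blast
  interpret schreier "generate free_grp A" using sub by (simp add: schreier_def)
  show "free_group (free_grp\<lparr>carrier := generate free_grp A\<rparr>)"
    unfolding free_group_def using schreier_free_basis F.subgroup_imp_group[OF sub] by blast
qed

lemma reduced_map_inj: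
  assumes "inj_on f S" "fst ` set w \<subseteq> S" "reduced w"
  shows "reduced (map (\<lambda>(x, e). (f x, e)) w)"
  using assms(2,3)
proof (induction w)
  case (Cons l w)
  obtain x e where l: "l = (x, e)" by (cases l)
  have rw: "reduced w" using Cons.prems(2) by (simp add: reduced_Cons)
  have IH: "reduced (map (\<lambda>(x, e). (f x, e)) w)" using Cons rw by simp
  show ?case
  proof (cases w)
    case Nil then show ?thesis using l by simp
  next
    case (Cons m w')
    obtain y d where m: "m = (y, d)" by (cases m)
    have "m \<noteq> inv_letter l" using Cons \<open>reduced (l # w)\<close> by simp
    then have "(f y, d) \<noteq> inv_letter (f x, e)"
      using m l assms(1) \<open>fst ` set (l # w) \<subseteq> S\<close> Cons
      by (auto simp add: inv_letter_def inj_on_eq_iff)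
    then show ?thesis using IH l m Cons by simp
  qed
qed simp

lemma locally_free_inj_hom:
  assumes G: "group G" and G': "group G'" and h: "h \<in> hom G G'" and inj: "inj_on h (carrier G)"
    and lf: "locally_free G'"
  shows "locally_free G"
  unfolding locally_free_def
proof (intro conjI allI impI)
  show "group G" by (rule G)
  interpret gh: group_hom G G' h by (intro group_hom.intro group_hom_axioms.intro G G' h)
  fix A assume A: "finite A \<and> A \<subseteq> carrier G"
  define K where "K = generate G A"
  define K' where "K' = generate G' (h ` A)"
  have Ksub: "subgroup K G" unfolding K_def by (rule gh.G.generate_is_subgroup) (use A in simp)
  have Kc: "K \<subseteq> carrier G" using subgroup.subset[OF Ksub] .
  have K'eq: "K' = h ` K" unfolding K'_def K_def by (rule gh.generate_img) (use A in simp)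
  have fin: "finite (h ` A)" using A by simp
  have hAc: "h ` A \<subseteq> carrier G'" using A by (auto simp add: gh.hom_closed)
  have K'sub: "subgroup K' G'" unfolding K'_def by (rule gh.H.generate_is_subgroup) (rule hAc)
  have "free_group (G'\<lparr>carrier := K'\<rparr>)"
    using lf fin hAc unfolding locally_free_def K'_def by blast
  then obtain B' where B': "free_basis (G'\<lparr>carrier := K'\<rparr>) B'" unfolding free_group_def by blast
  have B'K': "B' \<subseteq> K'" using B' unfolding free_basis_def by simp
  define B where "B = inv_into K h ` B'"
  have BK: "B \<subseteq> K"
  proof
    fix b assume "b \<in> B"
    then obtain b' where b': "b' \<in> B'" "b = inv_into K h b'" unfolding B_def by blast
    then have "b' \<in> h ` K" using B'K' K'eq by blast
    then show "b \<in> K" using b' by (simp add: inv_into_into)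
  qed
  have hB: "h ` B = B'"
  proof -
    have "h ` B = (\<lambda>b'. h (inv_into K h b')) ` B'" by (simp add: B_def image_image)
    also have "\<dots> = (\<lambda>b'. b') ` B'"
    proof (rule image_cong[OF refl])
      fix b' assume "b' \<in> B'"
      then have "b' \<in> h ` K" using B'K' K'eq by blast
      then show "h (inv_into K h b') = b'" by (rule f_inv_into_f)
    qed
    finally show ?thesis by simp
  qed
  have Bc: "B \<subseteq> carrier G" using BK Kc by auto
  have genB: "generate G B = K"
  proof -
    have s1: "generate G B \<subseteq> K" by (rule gh.G.generate_subgroup_incl[OF BK Ksub])
    have "h ` generate G B = generate G' B'" using gh.generate_img[OF Bc] hB by simp
    also have "\<dots> = generate (G'\<lparr>carrier := K'\<rparr>) B'"
      using gh.H.generate_consistent[OF B'K' K'sub] by simp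
    also have "\<dots> = K'" using B' unfolding free_basis_def by simp
    finally have "h ` generate G B = h ` K" using K'eq by simp
    then show ?thesis using inj_on_image_eq_iff[OF inj] s1 Kc by blast
  qed
  have "free_basis (G\<lparr>carrier := K\<rparr>) B"
    unfolding free_basis_def
  proof (intro conjI allI impI)
    show "B \<subseteq> carrier (G\<lparr>carrier := K\<rparr>)" using BK by simp
    show "generate (G\<lparr>carrier := K\<rparr>) B = carrier (G\<lparr>carrier := K\<rparr>)"
      using gh.G.generate_consistent[OF BK Ksub] genB by simp
    fix w assume w: "w \<noteq> [] \<and> reduced w \<and> fst ` set w \<subseteq> B"
    define w' where "w' = map (\<lambda>(x, e). (h x, e)) w"
    have w'1: "w' \<noteq> []" using w by (simp add: w'_def)
    have w'2: "reduced w'" unfolding w'_def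
      by (rule reduced_map_inj[OF inj]) (use w Bc in auto)
    have fw': "fst ` set w' = h ` fst ` set w" unfolding w'_def by (induction w) auto
    have w'3: "fst ` set w' \<subseteq> B'" using fw' w hB by auto
    have "word_eval (G'\<lparr>carrier := K'\<rparr>) w' \<noteq> \<one>\<^bsub>G'\<lparr>carrier := K'\<rparr>\<^esub>"
      using B' w'1 w'2 w'3 unfolding free_basis_def by blast
    moreover have "word_eval (G'\<lparr>carrier := K'\<rparr>) w' = word_eval G' w'"
      by (rule word_eval_subgroup[OF G' K'sub]) (use w'3 B'K' in auto)
    moreover have "h (word_eval G w) = word_eval G' w'"
      unfolding w'_def by (rule word_eval_hom[OF h G G']) (use w Bc in auto)
    moreover have "word_eval (G\<lparr>carrier := K\<rparr>) w = word_eval G w"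
      by (rule word_eval_subgroup[OF G Ksub]) (use w BK in auto)
    ultimately show "word_eval (G\<lparr>carrier := K\<rparr>) w \<noteq> \<one>\<^bsub>G\<lparr>carrier := K\<rparr>\<^esub>"
      using gh.hom_one by (metis monoid.select_convs(2) partial_object.update_convs(1) monoid.surjective)
  qed
  then show "free_group (G\<lparr>carrier := generate G A\<rparr>)"
    unfolding free_group_def K_def[symmetric] using gh.G.subgroup_imp_group[OF Ksub] by blast
qed

context group begin

lemma cancel1[simp]: "x \<in> carrier G \<Longrightarrow> y \<in> carrier G \<Longrightarrow> inv x \<otimes> (x \<otimes> y) = y"
  by (simp add: m_assoc[symmetric])
lemma cancel2[simp]: "x \<in> carrier G \<Longrightarrow> y \<in> carrier G \<Longrightarrow> x \<otimes> (inv x \<otimes> y) = y"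
  by (simp add: m_assoc[symmetric])

lemma alg1: "x \<in> carrier G \<Longrightarrow> y \<in> carrier G \<Longrightarrow> inv x \<otimes> inv (x \<otimes> inv y \<otimes> inv x) \<otimes> x = y"
  by (simp add: inv_mult_group m_assoc)

lemma alg2: "x \<in> carrier G \<Longrightarrow> y \<in> carrier G \<Longrightarrow> z \<in> carrier G \<Longrightarrow>
  y = inv x \<otimes> inv z \<otimes> x \<Longrightarrow> inv y \<otimes> (inv x \<otimes> (inv z \<otimes> (x \<otimes> \<one>))) = \<one>"
  by (simp add: inv_mult_group m_assoc)

lemma alg3: assumes "x \<in> carrier G" "y \<in> carrier G" "z \<in> carrier G"
  "inv y \<otimes> (inv x \<otimes> (inv z \<otimes> x)) = \<one>" shows "y = inv x \<otimes> inv z \<otimes> x"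
proof -
  have "inv (inv x \<otimes> inv z \<otimes> x) = inv y"
    by (rule inv_equality) (use assms in \<open>simp_all add: m_assoc\<close>)
  then have "inv (inv (inv x \<otimes> inv z \<otimes> x)) = inv (inv y)" by simp
  then show ?thesis using assms by simp
qed

lemma alg4: "x \<in> carrier G \<Longrightarrow> y \<in> carrier G \<Longrightarrow> z \<in> carrier G \<Longrightarrow>
  y = inv x \<otimes> inv z \<otimes> x \<Longrightarrow> z = x \<otimes> inv y \<otimes> inv x"
  by (simp add: inv_mult_group m_assoc)

lemma alg5: assumes "x \<in> carrier G" "y \<in> carrier G" "x \<otimes> inv y \<otimes> inv x = \<one>" shows "y = \<one>"
proof -
  have "inv y = inv x \<otimes> (x \<otimes> inv y \<otimes> inv x) \<otimes> x" using assms(1,2) by (simp add: m_assoc)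
  then have "inv y = inv x \<otimes> \<one> \<otimes> x" by (simp only: assms(3))
  then have "inv y = \<one>" using assms by simp
  then show ?thesis using assms by simp
qed

lemma alg6: assumes "x \<in> carrier G" "y \<in> carrier G" "inv x \<otimes> inv y \<otimes> x = \<one>" shows "y = \<one>"
proof -
  have "inv y = x \<otimes> (inv x \<otimes> inv y \<otimes> x) \<otimes> inv x" using assms(1,2) by (simp add: m_assoc)
  then have "inv y = x \<otimes> \<one> \<otimes> inv x" by (simp only: assms(3))
  then have "inv y = \<one>" using assms by simp
  then show ?thesis using assms by simp
qed

end

definition xw :: "int \<Rightarrow> (int + int) word" where "xw m = [(Inl m, True)]"
definition yw :: "int \<Rightarrow> (int + int) word" where "yw n = [(Inr n, True)]"

fun Yp :: "nat \<Rightarrow> (int + int) word" where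
  "Yp 0 = yw 0"
| "Yp (Suc k) = xw (int k + 1) \<otimes>\<^bsub>free_grp\<^esub> inv\<^bsub>free_grp\<^esub> (Yp k) \<otimes>\<^bsub>free_grp\<^esub> inv\<^bsub>free_grp\<^esub> (xw (int k + 1))"

fun Yn :: "nat \<Rightarrow> (int + int) word" where
  "Yn 0 = yw 0"
| "Yn (Suc k) = inv\<^bsub>free_grp\<^esub> (xw (- int k)) \<otimes>\<^bsub>free_grp\<^esub> inv\<^bsub>free_grp\<^esub> (Yn k) \<otimes>\<^bsub>free_grp\<^esub> xw (- int k)"

definition Y :: "int \<Rightarrow> (int + int) word" where
  "Y n = (if 0 \<le> n then Yp (nat n) else Yn (nat (- n)))"

lemma xw_c: "xw m \<in> carrier free_grp" by (simp add: xw_def)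
lemma yw_c: "yw m \<in> carrier free_grp" by (simp add: yw_def)
lemma Yp_c: "Yp k \<in> carrier free_grp"
  by (induction k) (simp_all only: Yp.simps yw_c F.m_closed F.inv_closed xw_c)
lemma Yn_c: "Yn k \<in> carrier free_grp"
  by (induction k) (simp_all only: Yn.simps yw_c F.m_closed F.inv_closed xw_c)
lemma Y_c: "Y n \<in> carrier free_grp"
  by (simp only: Y_def Yp_c Yn_c if_cancel split: if_split) simp
lemma xw_r[simp]: "reduced (xw m)" using xw_c by simp
lemma yw_r[simp]: "reduced (yw m)" using yw_c by simp
lemma Yp_r[simp]: "reduced (Yp m)" using Yp_c by simp
lemma Yn_r[simp]: "reduced (Yn m)" using Yn_c by simp
lemma Y_r[simp]: "reduced (Y m)" using Y_c by simp

lemma Y_rel: "Y n = inv\<^bsub>free_grp\<^esub> (xw (n + 1)) \<otimes>\<^bsub>free_grp\<^esub> inv\<^bsub>free_grp\<^esub> (Y (n + 1)) \<otimes>\<^bsub>free_grp\<^esub> xw (n + 1)"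
proof (cases "0 \<le> n")
  case True
  define k where "k = nat n"
  have e1: "Y n = Yp k" using True by (simp add: Y_def k_def)
  have nk: "nat (n + 1) = Suc k" using True unfolding k_def by arith
  have xe: "int k + 1 = n + 1" using True by (simp add: k_def)
  have e2: "Y (n + 1) = xw (n + 1) \<otimes>\<^bsub>free_grp\<^esub> inv\<^bsub>free_grp\<^esub> (Yp k) \<otimes>\<^bsub>free_grp\<^esub> inv\<^bsub>free_grp\<^esub> (xw (n + 1))"
    using True nk by (simp only: Y_def if_True Yp.simps xe) simp
  show ?thesis unfolding e1 e2 by (rule F.alg1[symmetric]) simp_all
next
  case False
  define k where "k = nat (- n) - 1"
  have nk: "nat (- n) = Suc k" using False unfolding k_def by arith
  have xe: "- int k = n + 1" using False unfolding k_def by arith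
  have e1: "Y n = inv\<^bsub>free_grp\<^esub> (xw (n + 1)) \<otimes>\<^bsub>free_grp\<^esub> inv\<^bsub>free_grp\<^esub> (Yn k) \<otimes>\<^bsub>free_grp\<^esub> xw (n + 1)"
    using False nk by (simp only: Y_def if_False Yn.simps xe)
  have e2: "Y (n + 1) = Yn k"
  proof (cases "k = 0")
    case True
    then have "n + 1 = 0" using xe by simp
    then show ?thesis using True by (simp add: Y_def)
  next
    case False
    then have "\<not> 0 \<le> n + 1" "nat (- (n + 1)) = k" using xe by arith+
    then show ?thesis by (simp add: Y_def)
  qed
  show ?thesis unfolding e1 e2 ..
qed

lemma Yp_ne: "Yp k \<noteq> []"
proof (induction k)
  case 0 then show ?case by (simp add: yw_def)
next
  case (Suc k)
  show ?case
  proof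
    assume "Yp (Suc k) = []"
    then have "xw (int k + 1) \<otimes>\<^bsub>free_grp\<^esub> inv\<^bsub>free_grp\<^esub> (Yp k) \<otimes>\<^bsub>free_grp\<^esub> inv\<^bsub>free_grp\<^esub> (xw (int k + 1)) = \<one>\<^bsub>free_grp\<^esub>"
      by (simp only: Yp.simps) simp
    then have "Yp k = \<one>\<^bsub>free_grp\<^esub>" by (rule F.alg5[rotated 2]) simp_all
    with Suc show False by simp
  qed
qed

lemma Yn_ne: "Yn k \<noteq> []"
proof (induction k)
  case 0 then show ?case by (simp add: yw_def)
next
  case (Suc k)
  show ?case
  proof
    assume "Yn (Suc k) = []"
    then have "inv\<^bsub>free_grp\<^esub> (xw (- int k)) \<otimes>\<^bsub>free_grp\<^esub> inv\<^bsub>free_grp\<^esub> (Yn k) \<otimes>\<^bsub>free_grp\<^esub> xw (- int k) = \<one>\<^bsub>free_grp\<^esub>"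
      by (simp only: Yn.simps) simp
    then have "Yn k = \<one>\<^bsub>free_grp\<^esub>" by (rule F.alg6[rotated 2]) simp_all
    with Suc show False by simp
  qed
qed

lemma Y_ne: "Y n \<noteq> []"
  by (simp add: Y_def Yp_ne Yn_ne)

definition gimg :: "int + int \<Rightarrow> (int + int) word" where
  "gimg a = (case a of Inl m \<Rightarrow> xw m | Inr n \<Rightarrow> Y n)"

lemma gimg_c: "range gimg \<subseteq> carrier free_grp"
  by (auto simp add: gimg_def split: sum.splits)

definition phi :: "(int + int) word \<Rightarrow> (int + int) word" where
  "phi = ext free_grp gimg"

lemma phi_hom: "phi \<in> hom free_grp free_grp"
  unfolding phi_def by (rule F.ext_hom[OF gimg_c])

lemma phi_gen: "phi [(a, True)] = gimg a"
proof -
  have "gimg a \<in> carrier free_grp" using gimg_c by auto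
  then show ?thesis by (simp add: phi_def F.ext_Cons del: free_grp_simps)
qed

definition rel :: "int \<Rightarrow> (int + int) word" where
  "rel n = [(Inr n, False), (Inl (n + 1), False), (Inr (n + 1), False), (Inl (n + 1), True)]"

lemma H_rels_rel: "H_rels = range rel"
  by (simp add: H_rels_def rel_def)

lemma phi_rel: "phi (reduce (rel n)) = []"
proof -
  have "phi (reduce (rel n)) = ext free_grp gimg (rel n)"
    unfolding phi_def by (rule F.ext_reduce[OF gimg_c])
  also have "\<dots> = inv\<^bsub>free_grp\<^esub> (Y n) \<otimes>\<^bsub>free_grp\<^esub> (inv\<^bsub>free_grp\<^esub> (xw (n + 1)) \<otimes>\<^bsub>free_grp\<^esub>
      (inv\<^bsub>free_grp\<^esub> (Y (n + 1)) \<otimes>\<^bsub>free_grp\<^esub> (xw (n + 1) \<otimes>\<^bsub>free_grp\<^esub> \<one>\<^bsub>free_grp\<^esub>)))"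
    by (simp only: rel_def F.ext_Cons F.ext_Nil gimg_def fst_conv snd_conv if_True if_False sum.case)
  also have "\<dots> = \<one>\<^bsub>free_grp\<^esub>" by (rule F.alg2[OF xw_c Y_c Y_c Y_rel])
  finally show ?thesis by simp
qed

lemma rel_prod: "reduce (rel n) = inv\<^bsub>free_grp\<^esub> (yw n) \<otimes>\<^bsub>free_grp\<^esub> (inv\<^bsub>free_grp\<^esub> (xw (n + 1)) \<otimes>\<^bsub>free_grp\<^esub>
      (inv\<^bsub>free_grp\<^esub> (yw (n + 1)) \<otimes>\<^bsub>free_grp\<^esub> xw (n + 1)))"
  by (simp add: rel_def yw_def xw_def inv_word_def inv_letter_def reduce_Cons)


definition SS :: "(int + int) word set" where
  "SS = (\<Union>g\<in>carrier free_grp. (\<lambda>r. g \<otimes>\<^bsub>free_grp\<^esub> r \<otimes>\<^bsub>free_grp\<^esub> inv\<^bsub>free_grp\<^esub> g) ` (reduce ` H_rels))"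

definition NN :: "(int + int) word set" where
  "NN = normal_closure free_grp (reduce ` H_rels)"

lemma NN_gen: "NN = generate free_grp SS"
  by (simp add: NN_def normal_closure_def SS_def)

lemma SS_c: "SS \<subseteq> carrier free_grp"
  unfolding SS_def by (auto simp del: free_grp_simps intro!: F.m_closed F.inv_closed) auto

lemma SS_conj: assumes h: "h \<in> SS" and g: "g \<in> carrier free_grp"
  shows "g \<otimes>\<^bsub>free_grp\<^esub> h \<otimes>\<^bsub>free_grp\<^esub> inv\<^bsub>free_grp\<^esub> g \<in> SS"
proof -
  obtain g' r where g': "g' \<in> carrier free_grp" and r: "r \<in> reduce ` H_rels"
    and hd: "h = g' \<otimes>\<^bsub>free_grp\<^esub> r \<otimes>\<^bsub>free_grp\<^esub> inv\<^bsub>free_grp\<^esub> g'"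
    using h unfolding SS_def by blast
  have rc: "r \<in> carrier free_grp" using r by auto
  have "g \<otimes>\<^bsub>free_grp\<^esub> h \<otimes>\<^bsub>free_grp\<^esub> inv\<^bsub>free_grp\<^esub> g =
    (g \<otimes>\<^bsub>free_grp\<^esub> g') \<otimes>\<^bsub>free_grp\<^esub> r \<otimes>\<^bsub>free_grp\<^esub> inv\<^bsub>free_grp\<^esub> (g \<otimes>\<^bsub>free_grp\<^esub> g')"
    unfolding hd using g g' rc
    by (simp only: F.m_assoc F.inv_mult_group F.m_closed F.inv_closed)
  moreover have "g \<otimes>\<^bsub>free_grp\<^esub> g' \<in> carrier free_grp" using g g' by (rule F.m_closed)
  ultimately show ?thesis using r unfolding SS_def by blast
qed

lemma NN_normal: "NN \<lhd> free_grp"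
  unfolding NN_gen by (rule F.normal_generateI[OF SS_c SS_conj])

lemma rel_in_NN: "reduce (rel n) \<in> NN"
proof -
  have "reduce (rel n) \<in> reduce ` H_rels" by (simp add: H_rels_rel)
  moreover have "reduce (rel n) = [] \<otimes>\<^bsub>free_grp\<^esub> reduce (rel n) \<otimes>\<^bsub>free_grp\<^esub> inv\<^bsub>free_grp\<^esub> []"
    by (simp add: reduce_reduced)
  ultimately have "reduce (rel n) \<in> SS" unfolding SS_def
    by (intro UN_I[of "[]"]) (simp, rule image_eqI[of _ _ "reduce (rel n)"], auto)
  then show ?thesis unfolding NN_gen by (rule generate.incl)
qed

interpretation phig: group_hom free_grp free_grp phi
  by (intro group_hom.intro group_hom_axioms.intro group_free_grp phi_hom)

lemma NN_sub_kernel: "NN \<subseteq> kernel free_grp free_grp phi"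
  unfolding NN_gen
proof (rule F.generate_subgroup_incl[OF _ phig.subgroup_kernel])
  show "SS \<subseteq> kernel free_grp free_grp phi"
  proof
    fix s assume s: "s \<in> SS"
    then obtain g r where g: "g \<in> carrier free_grp" and r: "r \<in> reduce ` H_rels"
      and sd: "s = g \<otimes>\<^bsub>free_grp\<^esub> r \<otimes>\<^bsub>free_grp\<^esub> inv\<^bsub>free_grp\<^esub> g"
      unfolding SS_def by blast
    obtain n where rn: "r = reduce (rel n)" using r by (auto simp add: H_rels_rel)
    have rc: "r \<in> carrier free_grp" using r by auto
    have "phi s = phi g \<otimes>\<^bsub>free_grp\<^esub> phi r \<otimes>\<^bsub>free_grp\<^esub> inv\<^bsub>free_grp\<^esub> phi g"
      unfolding sd using g rc by (simp only: phig.hom_mult phig.hom_inv F.m_closed F.inv_closed)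
    also have "\<dots> = \<one>\<^bsub>free_grp\<^esub>"
    proof -
      have pg: "phi g \<in> carrier free_grp" by (rule phig.hom_closed[OF g])
      have pr: "phi r = \<one>\<^bsub>free_grp\<^esub>" using phi_rel[of n] rn by simp
      show ?thesis unfolding pr using pg by (simp del: free_grp_simps)
    qed
    finally show "s \<in> kernel free_grp free_grp phi"
      unfolding kernel_def using s SS_c by auto
  qed
qed


interpretation NNn: normal NN free_grp by (rule NN_normal)

definition pq :: "(int + int) word \<Rightarrow> (int + int) word set" where
  "pq a = NN #>\<^bsub>free_grp\<^esub> a"

lemma QQ_group: "group (free_grp Mod NN)" by (rule NNn.factorgroup_is_group)

lemma pq_hom: "pq \<in> hom free_grp (free_grp Mod NN)"
  unfolding pq_def by (rule NNn.r_coset_hom_Mod)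

interpretation pqg: group_hom free_grp "free_grp Mod NN" pq
  by (intro group_hom.intro group_hom_axioms.intro group_free_grp QQ_group pq_hom)

lemma pq_N: "x \<in> NN \<Longrightarrow> pq x = \<one>\<^bsub>free_grp Mod NN\<^esub>"
  unfolding pq_def one_FactGroup
  by (rule F.coset_join2) (use NNn.subset NNn.subgroup_axioms in auto)

lemma pq_rel: "pq (yw n) = inv\<^bsub>free_grp Mod NN\<^esub> (pq (xw (n + 1))) \<otimes>\<^bsub>free_grp Mod NN\<^esub>
    inv\<^bsub>free_grp Mod NN\<^esub> (pq (yw (n + 1))) \<otimes>\<^bsub>free_grp Mod NN\<^esub> pq (xw (n + 1))"
proof (rule pqg.H.alg3)
  have "\<one>\<^bsub>free_grp Mod NN\<^esub> = pq (reduce (rel n))" using pq_N[OF rel_in_NN] by simp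
  also have "\<dots> = pq (inv\<^bsub>free_grp\<^esub> (yw n) \<otimes>\<^bsub>free_grp\<^esub> (inv\<^bsub>free_grp\<^esub> (xw (n + 1)) \<otimes>\<^bsub>free_grp\<^esub>
      (inv\<^bsub>free_grp\<^esub> (yw (n + 1)) \<otimes>\<^bsub>free_grp\<^esub> xw (n + 1))))" by (simp only: rel_prod)
  also have "\<dots> = inv\<^bsub>free_grp Mod NN\<^esub> (pq (yw n)) \<otimes>\<^bsub>free_grp Mod NN\<^esub> (inv\<^bsub>free_grp Mod NN\<^esub> (pq (xw (n + 1))) \<otimes>\<^bsub>free_grp Mod NN\<^esub>
      (inv\<^bsub>free_grp Mod NN\<^esub> (pq (yw (n + 1))) \<otimes>\<^bsub>free_grp Mod NN\<^esub> pq (xw (n + 1))))"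
    by (simp only: pqg.hom_mult pqg.hom_inv F.m_closed F.inv_closed xw_c yw_c)
  finally show "inv\<^bsub>free_grp Mod NN\<^esub> (pq (yw n)) \<otimes>\<^bsub>free_grp Mod NN\<^esub> (inv\<^bsub>free_grp Mod NN\<^esub> (pq (xw (n + 1))) \<otimes>\<^bsub>free_grp Mod NN\<^esub>
      (inv\<^bsub>free_grp Mod NN\<^esub> (pq (yw (n + 1))) \<otimes>\<^bsub>free_grp Mod NN\<^esub> pq (xw (n + 1)))) = \<one>\<^bsub>free_grp Mod NN\<^esub>" ..
qed (simp_all only: pqg.hom_closed xw_c yw_c)

lemma pq_Yp: "pq (Yp k) = pq (yw (int k))"
proof (induction k)
  case 0 then show ?case by simp
next
  case (Suc k)
  have "pq (Yp (Suc k)) = pq (xw (int k + 1)) \<otimes>\<^bsub>free_grp Mod NN\<^esub> inv\<^bsub>free_grp Mod NN\<^esub> (pq (Yp k))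
      \<otimes>\<^bsub>free_grp Mod NN\<^esub> inv\<^bsub>free_grp Mod NN\<^esub> (pq (xw (int k + 1)))"
    by (simp only: Yp.simps pqg.hom_mult pqg.hom_inv F.m_closed F.inv_closed xw_c Yp_c)
  also have "\<dots> = pq (yw (int k + 1))"
    unfolding Suc.IH
    by (rule sym, rule pqg.H.alg4[OF pqg.hom_closed[OF xw_c] pqg.hom_closed[OF yw_c] pqg.hom_closed[OF yw_c] pq_rel[of "int k"]])
  also have "int k + 1 = int (Suc k)" by simp
  finally show ?case .
qed

lemma pq_Yn: "pq (Yn k) = pq (yw (- int k))"
proof (induction k)
  case 0 then show ?case by simp
next
  case (Suc k)
  have "pq (Yn (Suc k)) = inv\<^bsub>free_grp Mod NN\<^esub> (pq (xw (- int k))) \<otimes>\<^bsub>free_grp Mod NN\<^esub> inv\<^bsub>free_grp Mod NN\<^esub> (pq (Yn k))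
      \<otimes>\<^bsub>free_grp Mod NN\<^esub> pq (xw (- int k))"
    by (simp only: Yn.simps pqg.hom_mult pqg.hom_inv F.m_closed F.inv_closed xw_c Yn_c)
  also have "\<dots> = pq (yw (- int k - 1))"
    using pq_rel[of "- int k - 1"] unfolding Suc.IH by (simp only: diff_add_cancel)
  also have "- int k - 1 = - int (Suc k)" by simp
  finally show ?case .
qed

lemma pq_Y: "pq (Y n) = pq (yw n)"
  by (simp add: Y_def pq_Yp pq_Yn)

lemma pq_phi: assumes w: "reduced w" shows "pq (phi w) = pq w"
proof -
  let ?g = "\<lambda>a. pq [(a, True)]"
  have h2: "(\<lambda>w. pq (phi w)) \<in> hom free_grp (free_grp Mod NN)"
    by (rule homI) (simp_all only: pqg.hom_closed phig.hom_closed phig.hom_mult pqg.hom_mult)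
  have hg: "pq (phi [(a, True)]) = pq [(a, True)]" for a
    by (cases a) (simp_all add: phi_gen gimg_def xw_def pq_Y[unfolded yw_def])
  have "pq (phi w) = ext (free_grp Mod NN) ?g w"
    by (rule group.hom_free_unique[OF QQ_group h2 hg w])
  moreover have "pq w = ext (free_grp Mod NN) ?g w"
    by (rule group.hom_free_unique[OF QQ_group pq_hom _ w]) simp
  ultimately show ?thesis by simp
qed

lemma NN_kernel: "NN = kernel free_grp free_grp phi"
proof
  show "NN \<subseteq> kernel free_grp free_grp phi" by (rule NN_sub_kernel)
  show "kernel free_grp free_grp phi \<subseteq> NN"
  proof
    fix w assume "w \<in> kernel free_grp free_grp phi"
    then have w: "reduced w" "phi w = []" by (auto simp add: kernel_def)
    have "pq w = pq []" using pq_phi[OF w(1)] w(2) by simp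
    also have "pq [] = NN" unfolding pq_def using F.coset_mult_one[OF NNn.subset] by simp
    finally have "NN #>\<^bsub>free_grp\<^esub> w = NN" by (simp add: pq_def)
    moreover have "w \<in> NN #>\<^bsub>free_grp\<^esub> w" by (rule F.rcos_self) (use w NNn.subgroup_axioms in auto)
    ultimately show "w \<in> NN" by simp
  qed
qed

theorem lemma3p1:
  shows "locally_free (presented_group H_rels) \<and>
    (\<forall>m::int. pres_gen H_rels (Inl m) \<noteq> \<one>\<^bsub>presented_group H_rels\<^esub>) \<and>
    (\<forall>n::int. pres_gen H_rels (Inr n) \<noteq> \<one>\<^bsub>presented_group H_rels\<^esub>)"
proof -
  have P: "presented_group H_rels = free_grp Mod kernel free_grp free_grp phi"
    unfolding presented_group_def NN_def[symmetric] NN_kernel ..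
  have one: "\<one>\<^bsub>presented_group H_rels\<^esub> = NN" unfolding presented_group_def NN_def by simp
  have pg: "pres_gen H_rels a = NN #>\<^bsub>free_grp\<^esub> [(a, True)]" for a
    unfolding pres_gen_def NN_def ..
  have nontriv: "pres_gen H_rels a \<noteq> \<one>\<^bsub>presented_group H_rels\<^esub>" if ne: "gimg a \<noteq> []" for a
  proof
    assume "pres_gen H_rels a = \<one>\<^bsub>presented_group H_rels\<^esub>"
    then have e: "NN #>\<^bsub>free_grp\<^esub> [(a, True)] = NN" using pg one by simp
    have "[(a, True)] \<in> NN #>\<^bsub>free_grp\<^esub> [(a, True)]"
      by (rule F.rcos_self) (use NNn.subgroup_axioms in auto)
    then have "[(a, True)] \<in> kernel free_grp free_grp phi" using e NN_kernel by simp
    then have "phi [(a, True)] = []" by (simp add: kernel_def)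
    with ne show False by (simp add: phi_gen)
  qed
  have lf: "locally_free (free_grp Mod kernel free_grp free_grp phi)"
    by (rule locally_free_inj_hom[OF normal.factorgroup_is_group[OF phig.normal_kernel] group_free_grp
          phig.FactGroup_hom phig.FactGroup_inj_on locally_free_free_grp])
  show ?thesis
    using lf P nontriv by (simp add: gimg_def xw_def Y_ne)
qed

end
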